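(* Let $\mathcal{C}_1,\dots,\mathcal{C}_D\subsetneq\mathbb{F}_q^n$ be linear codes and $\rho:=\rho(\mathcal{C}_1,\dots,\mathcal{C}_D)$. Then every $\rho$-closed subset $M\subseteq[n]^D$ is inner-generated for the code $\mathcal{C}_1\boxplus\cdots\boxplus\mathcal{C}_D$.
   Context: $\mathbb{F}_q$ is a finite field of characteristic 2; $|v|$ is Hamming weight, $\|v\|=|v|/|S|$ for $v\in\mathbb{F}_q^S$. $\mathcal{L}_i$ is the set of lines in $[n]^D$ parallel to the $i$-th axis (sets $A_1\times\cdots\times A_D$ with $A_i=[n]$, $|A_j|=1$ for $j\ne i$), $\mathcal{L}=\bigcup_i\mathcal{L}_i$; a line in $\mathcal{L}_i$ is identified with $[n]$ via the $i$-th coordinate. $\mathcal{C}^{(i)}=\{c\in\mathbb{F}_q^{[n]^D}:c|_\ell\in\mathcal{C}_i\ \forall\ell\in\mathcal{L}_i\}$, $\mathcal{C}_1\boxplus\cdots\boxplus\mathcal{C}_D=\sum_i\mathcal{C}^{(i)}$; $|x|_i$ is the number of $\ell\in\mathcal{L}_i$ with $x|_\ell\ne0$, $\|x\|_i=|x|_i/n^{D-1}$. The collection is $\rho$-product-expanding if every $c\in\mathcal{C}_1\boxplus\cdots\boxplus\mathcal{C}_D$ can be written $c=\sum_ia_i$, $a_i\in\mathcal{C}^{(i)}$, with $\rho\sum_i\|a_i\|_i\le\|c\|$; $\rho(\mathcal{C}_1,\dots,\mathcal{C}_D)$ is the maximal such $\rho$. For $\ell\in\mathcal{L}_i$, $\mathcal{C}_\ell=\{c:\operatorname{supp}c\subseteq\ell,\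 c|_\ell\in\mathcal{C}_i\}$; for $M\subseteq[n]^D$, $L(M)=\{\ell\in\mathcal{L}:\ell\subseteq M\}$. $M$ is inner-generated for $\mathcal{C}_1\boxplus\cdots\boxplus\mathcal{C}_D$ if every codeword $c$ of it with $\operatorname{supp}c\subseteq M$ lies in $\sum_{\ell\in L(M)}\mathcal{C}_\ell$. For $\varepsilon>0$, $M$ is $\varepsilon$-closed if for every line $\ell\in\mathcal{L}$ either $\ell\subseteq M$ or $|\ell\cap M|<\varepsilon n$. *)

theory Defs
  imports Complex_Main "HOL-Library.Function_Algebras" "HOL-Library.FuncSet"
begin

text \<open>Coordinates are 0-based: [n] = {0..<n}, axes are {0..<D}.
  Vectors in F_q^n are functions nat => 'a vanishing outside {0..<n};
  points of the grid [n]^D are extensional functions in PiE {0..<D} (%_. {0..<n});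
  words in F_q^([n]^D) are functions on points vanishing outside the grid.\<close>

definition vecs :: "nat \<Rightarrow> (nat \<Rightarrow> 'a::zero) set" where
  "vecs n = {v. \<forall>j. n \<le> j \<longrightarrow> v j = 0}"

definition linear_code :: "nat \<Rightarrow> (nat \<Rightarrow> 'a::field) set \<Rightarrow> bool" where
  "linear_code n V \<longleftrightarrow> V \<subseteq> vecs n \<and> 0 \<in> V \<and>
     (\<forall>u\<in>V. \<forall>v\<in>V. u + v \<in> V) \<and> (\<forall>a. \<forall>v\<in>V. (\<lambda>j. a * v j) \<in> V)"

definition grid :: "nat \<Rightarrow> nat \<Rightarrow> (nat \<Rightarrow> nat) set" where
  "grid D n = PiE {..<D} (\<lambda>_. {..<n})"

definition words :: "nat \<Rightarrow> nat \<Rightarrow> ((nat \<Rightarrow> nat) \<Rightarrow> 'a::zero) set" where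
  "words D n = {c. \<forall>x. x \<notin> grid D n \<longrightarrow> c x = 0}"

definition line :: "nat \<Rightarrow> nat \<Rightarrow> nat \<Rightarrow> (nat \<Rightarrow> nat) \<Rightarrow> (nat \<Rightarrow> nat) set" where
  "line D n i p = {x \<in> grid D n. \<forall>j<D. j \<noteq> i \<longrightarrow> x j = p j}"

definition lines :: "nat \<Rightarrow> nat \<Rightarrow> nat \<Rightarrow> (nat \<Rightarrow> nat) set set" where
  "lines D n i = line D n i ` grid D n"

definition restr :: "nat \<Rightarrow> ((nat \<Rightarrow> nat) \<Rightarrow> 'a::zero) \<Rightarrow> nat \<Rightarrow> (nat \<Rightarrow> nat) \<Rightarrow> nat \<Rightarrow> 'a" where
  "restr n c i p = (\<lambda>t. if t < n then c (p(i := t)) else 0)"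

definition dircode :: "nat \<Rightarrow> nat \<Rightarrow> (nat \<Rightarrow> (nat \<Rightarrow> 'a::zero) set) \<Rightarrow> nat
    \<Rightarrow> ((nat \<Rightarrow> nat) \<Rightarrow> 'a) set" where
  "dircode D n C i = {c \<in> words D n. \<forall>p\<in>grid D n. restr n c i p \<in> C i}"

definition sumcode :: "nat \<Rightarrow> nat \<Rightarrow> (nat \<Rightarrow> (nat \<Rightarrow> 'a::comm_monoid_add) set)
    \<Rightarrow> ((nat \<Rightarrow> nat) \<Rightarrow> 'a) set" where
  "sumcode D n C = {(\<Sum>i<D. a i) | a. \<forall>i<D. a i \<in> dircode D n C i}"

definition rel_wt :: "nat \<Rightarrow> nat \<Rightarrow> ((nat \<Rightarrow> nat) \<Rightarrow> 'a::zero) \<Rightarrow> real" where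
  "rel_wt D n c = real (card {x \<in> grid D n. c x \<noteq> 0}) / real (n ^ D)"

definition rel_wt_dir :: "nat \<Rightarrow> nat \<Rightarrow> nat \<Rightarrow> ((nat \<Rightarrow> nat) \<Rightarrow> 'a::zero) \<Rightarrow> real" where
  "rel_wt_dir D n i c =
     real (card {l \<in> lines D n i. \<exists>x\<in>l. c x \<noteq> 0}) / real (n ^ (D - 1))"

definition product_expanding :: "nat \<Rightarrow> nat \<Rightarrow> (nat \<Rightarrow> (nat \<Rightarrow> 'a::field) set) \<Rightarrow> real \<Rightarrow> bool" where
  "product_expanding D n C r \<longleftrightarrow>
     (\<forall>c\<in>sumcode D n C. \<exists>a. (\<forall>i<D. a i \<in> dircode D n C i) \<and> c = (\<Sum>i<D. a i) \<and>
        r * (\<Sum>i<D. rel_wt_dir D n i (a i)) \<le> rel_wt D n c)"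

definition rho_pe :: "nat \<Rightarrow> nat \<Rightarrow> (nat \<Rightarrow> (nat \<Rightarrow> 'a::field) set) \<Rightarrow> real" where
  "rho_pe D n C = Sup {r. product_expanding D n C r}"

text \<open>C_l for a line l in L_i (the axis i is recorded explicitly, which matters only when n = 1).\<close>
definition linecode :: "nat \<Rightarrow> nat \<Rightarrow> (nat \<Rightarrow> (nat \<Rightarrow> 'a::zero) set) \<Rightarrow> nat \<Rightarrow> (nat \<Rightarrow> nat) set
    \<Rightarrow> ((nat \<Rightarrow> nat) \<Rightarrow> 'a) set" where
  "linecode D n C i l = {c \<in> words D n. (\<forall>x. c x \<noteq> 0 \<longrightarrow> x \<in> l) \<and> (\<forall>p\<in>l. restr n c i p \<in> C i)}"

definition lines_in :: "nat \<Rightarrow> nat \<Rightarrow> (nat \<Rightarrow> nat) set \<Rightarrow> (nat \<times> (nat \<Rightarrow> nat) set) set" where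
  "lines_in D n M = {(i, l). i < D \<and> l \<in> lines D n i \<and> l \<subseteq> M}"

definition inner_generated :: "nat \<Rightarrow> nat \<Rightarrow> (nat \<Rightarrow> (nat \<Rightarrow> 'a::field) set) \<Rightarrow> (nat \<Rightarrow> nat) set \<Rightarrow> bool" where
  "inner_generated D n C M \<longleftrightarrow>
     (\<forall>c\<in>sumcode D n C. (\<forall>x. c x \<noteq> 0 \<longrightarrow> x \<in> M) \<longrightarrow>
        (\<exists>f. (\<forall>il\<in>lines_in D n M. f il \<in> linecode D n C (fst il) (snd il)) \<and>
             c = (\<Sum>il\<in>lines_in D n M. f il)))"

definition eps_closed :: "nat \<Rightarrow> nat \<Rightarrow> real \<Rightarrow> (nat \<Rightarrow> nat) set \<Rightarrow> bool" where
  "eps_closed D n e M \<longleftrightarrow>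
     (\<forall>i<D. \<forall>l\<in>lines D n i. l \<subseteq> M \<or> real (card (l \<inter> M)) < e * real n)"

end

theory Submission
  imports Defs
begin


lemma grid_finite: "finite (grid D n)"
  unfolding grid_def by (simp add: finite_PiE)

lemma lines_finite: "finite (lines D n i)"
  unfolding lines_def using grid_finite by simp

lemma line_sub_grid: "line D n i p \<subseteq> grid D n"
  unfolding line_def by auto

lemma self_in_line: "x \<in> grid D n \<Longrightarrow> x \<in> line D n i x"
  unfolding line_def by auto

lemma line_eq: "x \<in> line D n i q \<Longrightarrow> line D n i x = line D n i q"
  unfolding line_def by auto

lemma upd_grid: "p \<in> grid D n \<Longrightarrow> i < D \<Longrightarrow> t < n \<Longrightarrow> p(i := t) \<in> grid D n"
  unfolding grid_def by (auto simp: PiE_iff extensional_def)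

lemma upd_line: "p \<in> grid D n \<Longrightarrow> i < D \<Longrightarrow> t < n \<Longrightarrow> line D n i (p(i := t)) = line D n i p"
  unfolding line_def using upd_grid[of p D n i t] by auto

lemma upd_in_line: "p \<in> grid D n \<Longrightarrow> i < D \<Longrightarrow> t < n \<Longrightarrow> p(i := t) \<in> line D n i p"
  using upd_line self_in_line upd_grid by metis

definition mask :: "nat \<Rightarrow> nat \<Rightarrow> nat \<Rightarrow> ((nat \<Rightarrow> nat) set \<Rightarrow> bool) \<Rightarrow> ((nat \<Rightarrow> nat) \<Rightarrow> 'a::zero) \<Rightarrow> ((nat \<Rightarrow> nat) \<Rightarrow> 'a)" where
  "mask D n i P a = (\<lambda>x. if P (line D n i x) then a x else 0)"

lemma restr_mask: "p \<in> grid D n \<Longrightarrow> i < D \<Longrightarrow>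
   restr n (mask D n i P a) i p = (if P (line D n i p) then restr n a i p else 0)"
  unfolding restr_def mask_def by (auto simp: upd_line fun_eq_iff)

lemma mask_dircode:
  assumes "a \<in> dircode D n C i" "i < D" "0 \<in> C i"
  shows "mask D n i P a \<in> dircode D n C i"
proof -
  have "\<forall>p\<in>grid D n. restr n (mask D n i P a) i p \<in> C i"
    using assms by (auto simp: restr_mask dircode_def)
  moreover have "mask D n i P a \<in> words D n"
    using assms by (auto simp: words_def dircode_def mask_def)
  ultimately show ?thesis unfolding dircode_def by auto
qed

lemma mask_split: "(a::_\<Rightarrow>'a::monoid_add) = mask D n i P a + mask D n i (\<lambda>l. \<not> P l) a"
  unfolding mask_def by (auto simp: fun_eq_iff)

lemma dircode_add:
  assumes "linear_code n (C i)" "a \<in> dircode D n C i" "b \<in> dircode D n C i"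
  shows "a + b \<in> dircode D n C i"
proof -
  have "restr n (a + b) i p = restr n a i p + restr n b i p" for p
    unfolding restr_def by (auto simp: fun_eq_iff)
  then show ?thesis using assms unfolding dircode_def linear_code_def words_def by auto
qed

lemma words_grid: "a \<in> dircode D n C i \<Longrightarrow> a x \<noteq> 0 \<Longrightarrow> x \<in> grid D n"
  unfolding dircode_def words_def by auto

lemma lines_elem: "l \<in> lines D n i \<Longrightarrow> \<exists>p\<in>grid D n. l = line D n i p"
  unfolding lines_def by auto

lemma sum_app: "(\<Sum>a\<in>A. f a) x = (\<Sum>a\<in>A. f a x)"
  by (induct A rule: infinite_finite_induct) auto

lemma in_line_iff: "x \<in> grid D n \<Longrightarrow> l \<in> lines D n i \<Longrightarrow> x \<in> l \<longleftrightarrow> l = line D n i x"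
  using lines_elem line_eq self_in_line by metis

lemma final:
  assumes a: "\<forall>i<D. a i \<in> dircode D n C i" and c: "c = (\<Sum>i<D. a i)"
    and good: "\<forall>i<D. \<forall>x. a i x \<noteq> 0 \<longrightarrow> line D n i x \<subseteq> M"
  shows "\<exists>f. (\<forall>il\<in>lines_in D n M. f il \<in> linecode D n C (fst il) (snd il)) \<and>
             c = (\<Sum>il\<in>lines_in D n M. f il)"
proof -
  define f where "f = (\<lambda>(i::nat,l). \<lambda>x. if x \<in> l then a i x else 0)"
  have "f (i, l) \<in> linecode D n C i l" if il: "(i, l) \<in> lines_in D n M" for i l
  proof -
    have i: "i < D" and l: "l \<in> lines D n i" using il by (auto simp: lines_in_def)
    obtain q where q: "q \<in> grid D n" "l = line D n i q" using lines_elem[OF l] by auto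
    have "restr n (f (i,l)) i p \<in> C i" if p: "p \<in> l" for p
    proof -
      have pg: "p \<in> grid D n" using p q line_sub_grid by blast
      have lp: "line D n i p = l" using p q line_eq by metis
      have "restr n (f (i,l)) i p = restr n (a i) i p"
        unfolding restr_def f_def using upd_in_line[OF pg i] lp by (auto simp: fun_eq_iff)
      then show ?thesis using a i pg by (auto simp: dircode_def)
    qed
    moreover have "f (i,l) \<in> words D n"
      using a i q line_sub_grid by (auto simp: words_def f_def dircode_def)
    ultimately show ?thesis unfolding linecode_def f_def by auto
  qed
  moreover have "c = (\<Sum>il\<in>lines_in D n M. f il)"
  proof
    fix x
    have LI: "lines_in D n M = Sigma {..<D} (\<lambda>i. {l \<in> lines D n i. l \<subseteq> M})"
      unfolding lines_in_def by auto
    have fin: "finite {l \<in> lines D n i. l \<subseteq> M}" for i using lines_finite by simp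
    have "(\<Sum>il\<in>lines_in D n M. f il) x = (\<Sum>il\<in>lines_in D n M. f il x)" by (rule sum_app)
    also have "\<dots> = (\<Sum>i<D. \<Sum>l\<in>{l \<in> lines D n i. l \<subseteq> M}. f (i,l) x)"
      unfolding LI by (subst sum.Sigma) (auto simp: fin)
    also have "\<dots> = (\<Sum>i<D. a i x)"
    proof (rule sum.cong[OF refl])
      fix i assume "i \<in> {..<D}"
      then have i: "i < D" by simp
      show "(\<Sum>l\<in>{l \<in> lines D n i. l \<subseteq> M}. f (i,l) x) = a i x"
      proof (cases "a i x = 0")
        case True then show ?thesis by (simp add: f_def sum.neutral)
      next
        case False
        have xg: "x \<in> grid D n" using words_grid a i False by blast
        have LM: "line D n i x \<subseteq> M" using good i False by blast
        have LL: "line D n i x \<in> lines D n i" using xg unfolding lines_def by auto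
        have "(\<Sum>l\<in>{l \<in> lines D n i. l \<subseteq> M}. f (i,l) x) =
              (\<Sum>l\<in>{l \<in> lines D n i. l \<subseteq> M}. if l = line D n i x then a i x else 0)"
          by (rule sum.cong[OF refl]) (auto simp: f_def in_line_iff[OF xg])
        also have "\<dots> = a i x" using fin LM LL by (simp add: sum.delta)
        finally show ?thesis .
      qed
    qed
    also have "\<dots> = c x" using c sum_app by metis
    finally show "c x = (\<Sum>il\<in>lines_in D n M. f il) x" by simp
  qed
  ultimately show ?thesis by (intro exI[of _ f]) auto
qed

lemma lines_sub_grid: "l \<in> lines D n i \<Longrightarrow> l \<subseteq> grid D n"
  unfolding lines_def using line_sub_grid by blast

lemma lines_fin: "l \<in> lines D n i \<Longrightarrow> finite l"
  using lines_sub_grid grid_finite finite_subset by metis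

lemma restr_zero: "restr n 0 i p = 0"
  by (simp add: restr_def fun_eq_iff)

definition badset :: "nat \<Rightarrow> nat \<Rightarrow> (nat \<Rightarrow> nat) set \<Rightarrow> (nat \<Rightarrow> (nat \<Rightarrow> nat) \<Rightarrow> 'a::zero) \<Rightarrow> (nat \<times> (nat \<Rightarrow> nat) set) set" where
  "badset D n M a = {(i,l). i < D \<and> l \<in> lines D n i \<and> \<not> l \<subseteq> M \<and> (\<exists>x\<in>l. a i x \<noteq> 0)}"

lemma badset_finite: "finite (badset D n M a)"
proof -
  have "badset D n M a \<subseteq> Sigma {..<D} (\<lambda>i. lines D n i)" unfolding badset_def by auto
  then show ?thesis by (rule finite_subset) (auto simp: lines_finite)
qed

lemma sum_nz: "(\<Sum>i\<in>A. f i) \<noteq> (0::'a::comm_monoid_add) \<Longrightarrow> \<exists>i\<in>A. f i \<noteq> 0"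
  using sum.neutral by metis

lemma descent:
  fixes C :: "nat \<Rightarrow> (nat \<Rightarrow> 'a::field) set"
  assumes lin: "\<forall>i<D. linear_code n (C i)"
    and clo: "eps_closed D n (rho_pe D n C) M"
    and a: "\<forall>i<D. a i \<in> dircode D n C i" and c: "c = (\<Sum>i<D. a i)"
    and cM: "\<forall>x. c x \<noteq> 0 \<longrightarrow> x \<in> M"
    and ne: "badset D n M a \<noteq> {}"
  shows "\<exists>a2. (\<forall>i<D. a2 i \<in> dircode D n C i) \<and> c = (\<Sum>i<D. a2 i) \<and>
              card (badset D n M a2) < card (badset D n M a)"
proof -
  define ag where "ag i = mask D n i (\<lambda>l. l \<subseteq> M) (a i)" for i
  define ab where "ab i = mask D n i (\<lambda>l. \<not> l \<subseteq> M) (a i)" for i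
  define c' where "c' = (\<Sum>i<D. ab i)"
  define B where "B = badset D n M a"
  define \<rho> where "\<rho> = rho_pe D n C"
  have zC: "\<forall>i<D. 0 \<in> C i" using lin by (auto simp: linear_code_def)
  have agd: "\<forall>i<D. ag i \<in> dircode D n C i" using a zC mask_dircode unfolding ag_def by blast
  have abd: "\<forall>i<D. ab i \<in> dircode D n C i" using a zC mask_dircode unfolding ab_def by blast
  have c'S: "c' \<in> sumcode D n C" unfolding sumcode_def c'_def using abd by auto
  have csplit: "c = (\<Sum>i<D. ag i) + c'"
  proof -
    have "a i = ag i + ab i" for i unfolding ag_def ab_def by (rule mask_split)
    then show ?thesis unfolding c c'_def by (simp add: sum.distrib[symmetric])
  qed
  have finB: "finite B" unfolding B_def by (rule badset_finite)
  have Bne: "B \<noteq> {}" using ne B_def by simp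
  have Bcl: "real (card (l \<inter> M)) < \<rho> * real n" if "(i,l) \<in> B" for i l
    using that clo unfolding B_def badset_def eps_closed_def \<rho>_def by auto
  have supp: "{x \<in> grid D n. c' x \<noteq> 0} \<subseteq> (\<Union>(i,l)\<in>B. l \<inter> M)"
  proof
    fix x assume x: "x \<in> {x \<in> grid D n. c' x \<noteq> 0}"
    then have xg: "x \<in> grid D n" and cx: "c' x \<noteq> 0" by auto
    obtain i where i: "i < D" and abx: "ab i x \<noteq> 0"
    proof -
      have "(\<Sum>i<D. ab i x) \<noteq> 0" using cx unfolding c'_def sum_app .
      then show ?thesis using sum_nz that by blast
    qed
    have bad: "\<not> line D n i x \<subseteq> M" and ax: "a i x \<noteq> 0" using abx by (auto simp: ab_def mask_def split: if_splits)
    have LL: "line D n i x \<in> lines D n i" using xg unfolding lines_def by auto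
    have xl: "x \<in> line D n i x" using xg self_in_line by metis
    have inB: "(i, line D n i x) \<in> B" unfolding B_def badset_def using i LL bad ax xl by auto
    have "x \<in> M"
    proof (rule ccontr)
      assume xM: "x \<notin> M"
      have "ag j x = 0" for j
        using xM self_in_line[OF xg, of j] by (auto simp: ag_def mask_def)
      then have "(\<Sum>i<D. ag i) x = 0" by (simp add: sum_app)
      moreover have "c x = 0" using cM xM by auto
      ultimately have "c' x = 0" using csplit by (metis add_0 plus_fun_apply)
      then show False using cx by simp
    qed
    then show "x \<in> (\<Union>(i,l)\<in>B. l \<inter> M)" using inB xl by blast
  qed
  have cardsupp: "card {x \<in> grid D n. c' x \<noteq> 0} \<le> (\<Sum>(i,l)\<in>B. card (l \<inter> M))"
  proof -
    have "card {x \<in> grid D n. c' x \<noteq> 0} \<le> card (\<Union>(i,l)\<in>B. l \<inter> M)"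
    proof (rule card_mono)
      have "finite l" if "(i,l) \<in> B" for i l using that lines_fin unfolding B_def badset_def by auto
      then show "finite (\<Union>(i,l)\<in>B. l \<inter> M)" using finB by auto
    qed (use supp in auto)
    also have "\<dots> \<le> (\<Sum>(i,l)\<in>B. card (l \<inter> M))"
      using card_UN_le[OF finB, of "\<lambda>(i,l). l \<inter> M"] by (simp add: case_prod_unfold)
    finally show ?thesis .
  qed
  have strict: "real (\<Sum>(i,l)\<in>B. card (l \<inter> M)) < real (card B) * (\<rho> * real n)"
  proof -
    have "(\<Sum>(i,l)\<in>B. real (card (l \<inter> M))) < (\<Sum>(i,l)\<in>B. \<rho> * real n)"
      by (rule sum_strict_mono[OF finB Bne]) (use Bcl in auto)
    then show ?thesis by (simp add: of_nat_sum case_prod_unfold)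
  qed
  obtain i0 l0 where i0: "(i0, l0) \<in> B" using Bne by auto
  have D1: "1 \<le> D" using i0 unfolding B_def badset_def by auto
  have "0 < \<rho> * real n" using Bcl[OF i0] by linarith
  then have npos: "0 < n" and rpos: "0 < \<rho>"
    by (auto simp: zero_less_mult_iff)
  have nD: "real n ^ D = real n * real n ^ (D - 1)"
    using D1 by (metis Suc_diff_1 One_nat_def less_eq_Suc_le power_Suc)
  have nD1: "0 < real n ^ (D - 1)" using npos by simp
  obtain b' where b'd: "\<forall>i<D. b' i \<in> dircode D n C i" and c'eq: "c' = (\<Sum>i<D. b' i)"
    and cnt: "(\<Sum>i<D. card {l \<in> lines D n i. \<exists>x\<in>l. b' i x \<noteq> 0}) < card B"
  proof (cases "c' = 0")
    case True
    have z1: "\<forall>i<D. (0 :: (nat \<Rightarrow> nat) \<Rightarrow> 'a) \<in> dircode D n C i"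
      using zC by (auto simp: dircode_def words_def restr_zero)
    have z2: "c' = (\<Sum>i<D. (0 :: (nat \<Rightarrow> nat) \<Rightarrow> 'a))" using True by simp
    have z3: "(\<Sum>i<D. card {l \<in> lines D n i. \<exists>x\<in>l. (0 :: (nat \<Rightarrow> nat) \<Rightarrow> 'a) x \<noteq> 0}) < card B"
      using finB Bne by (simp add: card_gt_0_iff)
    show ?thesis using that[OF z1 z2] z3 by simp
  next
    case False
    then obtain x0 where x0: "c' x0 \<noteq> 0" by (auto simp: fun_eq_iff)
    define S where "S = {r. product_expanding D n C r}"
    have S0: "0 \<in> S" using c'S unfolding S_def product_expanding_def sumcode_def rel_wt_def by auto
    have x0g: "x0 \<in> grid D n"
    proof -
      have "(\<Sum>i<D. ab i x0) \<noteq> 0" using x0 unfolding c'_def sum_app .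
      then obtain i where "i < D" "ab i x0 \<noteq> 0" using sum_nz by blast
      then show ?thesis using words_grid abd by blast
    qed
    define N where "N = real n ^ (D - 1)"
    have Npos: "0 < N" using nD1 N_def by simp
    have rwd: "rel_wt_dir D n i e = real (card {l \<in> lines D n i. \<exists>x\<in>l. e x \<noteq> 0}) / N" for i e
      unfolding rel_wt_dir_def N_def by simp
    have rwdnn: "0 \<le> rel_wt_dir D n i e" for i e unfolding rel_wt_dir_def by simp
    have bdd: "bdd_above S"
      unfolding bdd_above_def
    proof (intro exI ballI)
      fix r assume "r \<in> S"
      then obtain e where ed: "\<forall>i<D. e i \<in> dircode D n C i" and ce: "c' = (\<Sum>i<D. e i)"
        and ineq: "r * (\<Sum>i<D. rel_wt_dir D n i (e i)) \<le> rel_wt D n c'"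
        using c'S unfolding S_def product_expanding_def by blast
      show "r \<le> \<bar>rel_wt D n c'\<bar> * N"
      proof (cases "r \<le> 0")
        case True then show ?thesis using Npos by (meson abs_ge_zero order_trans zero_le_mult_iff less_imp_le)
      next
        case False
        have "(\<Sum>i<D. e i x0) \<noteq> 0" using x0 unfolding ce sum_app .
        then obtain j where j: "j < D" "e j x0 \<noteq> 0" using sum_nz by blast
        have mem: "line D n j x0 \<in> {l \<in> lines D n j. \<exists>x\<in>l. e j x \<noteq> 0}"
          using x0g j self_in_line[OF x0g] unfolding lines_def by auto
        have fin: "finite {l \<in> lines D n j. \<exists>x\<in>l. e j x \<noteq> 0}" using lines_finite by simp
        have ne: "{l \<in> lines D n j. \<exists>x\<in>l. e j x \<noteq> 0} \<noteq> {}" using mem by blast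
        have "0 < card {l \<in> lines D n j. \<exists>x\<in>l. e j x \<noteq> 0}"
          using fin ne card_gt_0_iff by blast
        then have "1 \<le> card {l \<in> lines D n j. \<exists>x\<in>l. e j x \<noteq> 0}" by simp
        then have "1 / N \<le> rel_wt_dir D n j (e j)" unfolding rwd using Npos
          by (simp add: divide_right_mono)
        also have "\<dots> \<le> (\<Sum>i<D. rel_wt_dir D n i (e i))"
          by (rule member_le_sum) (use j rwdnn in auto)
        finally have "r * (1 / N) \<le> r * (\<Sum>i<D. rel_wt_dir D n i (e i))"
          using False by (intro mult_left_mono) auto
        moreover have "r / N = r * (1 / N)" by simp
        moreover have "rel_wt D n c' \<le> \<bar>rel_wt D n c'\<bar>" by simp
        ultimately have "r / N \<le> \<bar>rel_wt D n c'\<bar>" using ineq by linarith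
        then show ?thesis using Npos by (simp add: pos_divide_le_eq)
      qed
    qed
    define X where "X = real (\<Sum>(i,l)\<in>B. card (l \<inter> M)) / (real n * real (card B))"
    have cBpos: "0 < real (card B)" using finB Bne by (simp add: card_gt_0_iff)
    have Xlt: "X < Sup S"
    proof -
      have "X < \<rho>" unfolding X_def using strict npos cBpos
        by (simp add: pos_divide_less_eq mult_ac)
      then show ?thesis unfolding \<rho>_def rho_pe_def S_def by simp
    qed
    obtain s where sS: "s \<in> S" and Xs: "X < s"
      using Xlt less_cSup_iff[of S X] S0 bdd by blast
    have Xnn: "0 \<le> X" unfolding X_def by (rule divide_nonneg_nonneg[OF of_nat_0_le_iff]) simp
    have spos: "0 < s" using Xnn Xs by simp
    obtain e where ed: "\<forall>i<D. e i \<in> dircode D n C i" and ce: "c' = (\<Sum>i<D. e i)"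
      and ineq: "s * (\<Sum>i<D. rel_wt_dir D n i (e i)) \<le> rel_wt D n c'"
      using sS c'S unfolding S_def product_expanding_def by blast
    define K where "K = (\<Sum>i<D. card {l \<in> lines D n i. \<exists>x\<in>l. e i x \<noteq> 0})"
    have sumrw: "(\<Sum>i<D. rel_wt_dir D n i (e i)) = real K / N"
      unfolding rwd K_def by (simp add: sum_divide_distrib)
    have "rel_wt D n c' = real (card {x \<in> grid D n. c' x \<noteq> 0}) / (real n * N)"
      unfolding rel_wt_def N_def using nD by simp
    also have "\<dots> \<le> real (\<Sum>(i,l)\<in>B. card (l \<inter> M)) / (real n * N)"
      by (rule divide_right_mono[OF of_nat_mono[OF cardsupp]]) (use npos Npos in simp)
    also have "\<dots> = X * real (card B) / N"
      unfolding X_def using npos cBpos Npos by (simp add: field_simps)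
    also have "\<dots> < s * real (card B) / N"
      using Xs cBpos Npos by (simp add: divide_strict_right_mono)
    finally have "s * (real K / N) < s * real (card B) / N" using ineq sumrw by simp
    then have "s * real K < s * real (card B)" using Npos by (simp add: divide_strict_right_mono field_simps)
    then have "K < card B" using spos by simp
    then show ?thesis using that[OF ed ce] unfolding K_def by blast
  qed
  define a2 where "a2 i = ag i + b' i" for i
  have a2d: "\<forall>i<D. a2 i \<in> dircode D n C i"
    unfolding a2_def using agd b'd lin dircode_add by blast
  have ca2: "c = (\<Sum>i<D. a2 i)"
    unfolding a2_def sum.distrib using csplit c'eq by simp
  have "badset D n M a2 \<subseteq> Sigma {..<D} (\<lambda>i. {l \<in> lines D n i. \<exists>x\<in>l. b' i x \<noteq> 0})"
  proof
    fix il assume "il \<in> badset D n M a2"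
    then obtain i l x where il: "il = (i,l)" "i < D" "l \<in> lines D n i" "\<not> l \<subseteq> M" "x \<in> l" "a2 i x \<noteq> 0"
      unfolding badset_def by auto
    have "line D n i x = l" using il lines_elem line_eq by metis
    then have "ag i x = 0" using il by (simp add: ag_def mask_def)
    then have "b' i x \<noteq> 0" using il by (simp add: a2_def)
    then show "il \<in> Sigma {..<D} (\<lambda>i. {l \<in> lines D n i. \<exists>x\<in>l. b' i x \<noteq> 0})" using il by auto
  qed
  then have "card (badset D n M a2) \<le> card (Sigma {..<D} (\<lambda>i. {l \<in> lines D n i. \<exists>x\<in>l. b' i x \<noteq> 0}))"
    by (rule card_mono[rotated]) (auto simp: lines_finite)
  also have "\<dots> = (\<Sum>i<D. card {l \<in> lines D n i. \<exists>x\<in>l. b' i x \<noteq> 0})"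
    by (rule card_SigmaI) (auto simp: lines_finite)
  also have "\<dots> < card (badset D n M a)" using cnt B_def by simp
  finally show ?thesis using a2d ca2 by blast
qed


theorem lemma7:
  fixes C :: "nat \<Rightarrow> (nat \<Rightarrow> 'a::{field,finite}) set"
    and D n :: nat and M :: "(nat \<Rightarrow> nat) set"
  assumes "CHAR('a) = 2"
    and "\<forall>i<D. linear_code n (C i) \<and> C i \<noteq> vecs n"
    and "M \<subseteq> grid D n"
    and "eps_closed D n (rho_pe D n C) M"
  shows "inner_generated D n C M"
  unfolding inner_generated_def
proof (intro ballI impI)
  fix c assume cS: "c \<in> sumcode D n C" and cM: "\<forall>x. c x \<noteq> 0 \<longrightarrow> x \<in> M"
  have lin: "\<forall>i<D. linear_code n (C i)" using assms(2) by blast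
  have key: "\<forall>a. (\<forall>i<D. a i \<in> dircode D n C i) \<and> c = (\<Sum>i<D. a i) \<and> card (badset D n M a) = k \<longrightarrow>
    (\<exists>f. (\<forall>il\<in>lines_in D n M. f il \<in> linecode D n C (fst il) (snd il)) \<and>
             c = (\<Sum>il\<in>lines_in D n M. f il))" for k
  proof (induction k rule: less_induct)
    case (less k)
    show ?case
    proof (intro allI impI)
      fix a assume H: "(\<forall>i<D. a i \<in> dircode D n C i) \<and> c = (\<Sum>i<D. a i) \<and> card (badset D n M a) = k"
      show "\<exists>f. (\<forall>il\<in>lines_in D n M. f il \<in> linecode D n C (fst il) (snd il)) \<and>
             c = (\<Sum>il\<in>lines_in D n M. f il)"
      proof (cases "badset D n M a = {}")
        case True
        have "\<forall>i<D. \<forall>x. a i x \<noteq> 0 \<longrightarrow> line D n i x \<subseteq> M"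
        proof (intro allI impI)
          fix i x assume i: "i < D" and ax: "a i x \<noteq> 0"
          have xg: "x \<in> grid D n" using words_grid H i ax by blast
          have LL: "line D n i x \<in> lines D n i" using xg unfolding lines_def by auto
          show "line D n i x \<subseteq> M"
          proof (rule ccontr)
            assume "\<not> line D n i x \<subseteq> M"
            then have "(i, line D n i x) \<in> badset D n M a"
              unfolding badset_def using i LL ax self_in_line[OF xg] by auto
            then show False using True by simp
          qed
        qed
        then show ?thesis using final H by blast
      next
        case False
        obtain a2 where a2: "\<forall>i<D. a2 i \<in> dircode D n C i" "c = (\<Sum>i<D. a2 i)"
          "card (badset D n M a2) < card (badset D n M a)"
          using descent[OF lin assms(4)] H cM False by blast
        then show ?thesis using less.IH[of "card (badset D n M a2)"] H by blast
      qed
    qed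
  qed
  obtain a where "\<forall>i<D. a i \<in> dircode D n C i" "c = (\<Sum>i<D. a i)"
    using cS unfolding sumcode_def by blast
  then show "\<exists>f. (\<forall>il\<in>lines_in D n M. f il \<in> linecode D n C (fst il) (snd il)) \<and>
             c = (\<Sum>il\<in>lines_in D n M. f il)" using key by blast
qed

end
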